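(* Let $G=K_{r_1,\dots,r_k}$ with partition sets $X_1,\dots,X_k$ ($|X_i|=r_i$), and assume $|V(G)|$ is odd. Let $\mathcal X=\{X_1,\dots,X_k\}$. Then $G$ has a good bisection if and only if $\mathcal X$ has a good subset.
   Context: A bisection of a graph $G$ is a bipartite spanning subgraph $H$ of $G$ with partition sets $V_1,V_2$ (every edge of $H$ joins $V_1$ and $V_2$) with $||V_1|-|V_2||\le 1$. It is good if $2d_H(v)\ge d_G(v)-1$ for every $v\in V(G)$. Let $\mathcal S_1=\{X_i: |X_i| \text{ odd}\}$ and $\mathcal S_0=\{X_i:|X_i|\text{ even}\}$. For $\mathcal A\subseteq\mathcal X$ let $s(\mathcal A)=\sum_{X_i\in\mathcal A}|X_i|$. A subset $\mathcal A\subseteq\mathcal X$ is good if there exist $\mathcal A'\subseteq\mathcal A$ and an integer $n$ with $0\le n\le|\mathcal S_0\setminus\mathcal A|$ such that $s(\mathcal A')=s(\mathcal A)/2+(m+2n-1)/2$, where $m=|\mathcal S_1\setminus\mathcal A|$. *)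

theory Defs
  imports Main "HOL-Library.Disjoint_Sets"
begin

text \<open>Graphs: a finite vertex set V with a symmetric irreflexive adjacency relation E.\<close>

definition degree :: "'a set \<Rightarrow> ('a \<Rightarrow> 'a \<Rightarrow> bool) \<Rightarrow> 'a \<Rightarrow> nat" where
  "degree V E v = card {u \<in> V. E v u}"

definition is_bisection ::
  "'a set \<Rightarrow> ('a \<Rightarrow> 'a \<Rightarrow> bool) \<Rightarrow> 'a set \<Rightarrow> 'a set \<Rightarrow> ('a \<Rightarrow> 'a \<Rightarrow> bool) \<Rightarrow> bool" where
  "is_bisection V E V1 V2 F \<longleftrightarrow>
     (\<forall>u v. F u v \<longrightarrow> u \<in> V \<and> v \<in> V \<and> E u v) \<and>
     (\<forall>u v. F u v \<longrightarrow> F v u) \<and>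
     V1 \<union> V2 = V \<and> V1 \<inter> V2 = {} \<and>
     (\<forall>u v. F u v \<longrightarrow> (u \<in> V1 \<and> v \<in> V2) \<or> (u \<in> V2 \<and> v \<in> V1)) \<and>
     \<bar>int (card V1) - int (card V2)\<bar> \<le> 1"

definition is_good_bisection ::
  "'a set \<Rightarrow> ('a \<Rightarrow> 'a \<Rightarrow> bool) \<Rightarrow> 'a set \<Rightarrow> 'a set \<Rightarrow> ('a \<Rightarrow> 'a \<Rightarrow> bool) \<Rightarrow> bool" where
  "is_good_bisection V E V1 V2 F \<longleftrightarrow>
     is_bisection V E V1 V2 F \<and>
     (\<forall>v\<in>V. 2 * int (degree V F v) \<ge> int (degree V E v) - 1)"

definition has_good_bisection :: "'a set \<Rightarrow> ('a \<Rightarrow> 'a \<Rightarrow> bool) \<Rightarrow> bool" where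
  "has_good_bisection V E \<longleftrightarrow> (\<exists>V1 V2 F. is_good_bisection V E V1 V2 F)"

definition kmp_vertices :: "nat \<Rightarrow> (nat \<Rightarrow> nat) \<Rightarrow> (nat \<times> nat) set" where
  "kmp_vertices k r = {(i, j). i < k \<and> j < r i}"

definition kmp_part :: "(nat \<Rightarrow> nat) \<Rightarrow> nat \<Rightarrow> (nat \<times> nat) set" where
  "kmp_part r i = {(i', j). i' = i \<and> j < r i}"

definition kmp_adj :: "nat \<times> nat \<Rightarrow> nat \<times> nat \<Rightarrow> bool" where
  "kmp_adj u v \<longleftrightarrow> fst u \<noteq> fst v"

text \<open>Subsets of the family of parts are represented by index sets A \<subseteq> {..<k};
  s(A) = sum of the part sizes.\<close>
definition part_size_sum :: "(nat \<Rightarrow> nat) \<Rightarrow> nat set \<Rightarrow> nat" where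
  "part_size_sum r A = (\<Sum>i\<in>A. card (kmp_part r i))"

definition S1_idx :: "nat \<Rightarrow> (nat \<Rightarrow> nat) \<Rightarrow> nat set" where
  "S1_idx k r = {i. i < k \<and> odd (card (kmp_part r i))}"

definition S0_idx :: "nat \<Rightarrow> (nat \<Rightarrow> nat) \<Rightarrow> nat set" where
  "S0_idx k r = {i. i < k \<and> even (card (kmp_part r i))}"

definition good_subset :: "nat \<Rightarrow> (nat \<Rightarrow> nat) \<Rightarrow> nat set \<Rightarrow> bool" where
  "good_subset k r A \<longleftrightarrow> A \<subseteq> {..<k} \<and>
     (let m = card (S1_idx k r - A) in
      \<exists>A' \<subseteq> A. \<exists>n::int. 0 \<le> n \<and> n \<le> int (card (S0_idx k r - A)) \<and>
        2 * int (part_size_sum r A') = int (part_size_sum r A) + int m + 2 * n - 1)"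

definition has_good_subset :: "nat \<Rightarrow> (nat \<Rightarrow> nat) \<Rightarrow> bool" where
  "has_good_subset k r \<longleftrightarrow> (\<exists>A. good_subset k r A)"

end

theory Submission
  imports Defs
begin

lemma part_eq: "kmp_part r i = Pair i ` {..<r i}"
  unfolding kmp_part_def by auto

lemma card_part[simp]: "card (kmp_part r i) = r i"
  unfolding part_eq by (simp add: card_image inj_on_def)

lemma finite_part[simp]: "finite (kmp_part r i)"
  unfolding part_eq by simp

lemma V_eq: "kmp_vertices k r = (\<Union>i\<in>{..<k}. kmp_part r i)"
  unfolding kmp_vertices_def kmp_part_def by auto

lemma finite_V[simp]: "finite (kmp_vertices k r)"
  unfolding V_eq by simp

lemma part_sub: "i < k \<Longrightarrow> kmp_part r i \<subseteq> kmp_vertices k r"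
  unfolding V_eq by auto

lemma part_disj: "i \<noteq> j \<Longrightarrow> kmp_part r i \<inter> kmp_part r j = {}"
  unfolding kmp_part_def by auto

lemma card_subset_sum:
  assumes "S \<subseteq> kmp_vertices k r"
  shows "card S = (\<Sum>i<k. card (S \<inter> kmp_part r i))"
proof -
  have "S = (\<Union>i\<in>{..<k}. S \<inter> kmp_part r i)" using assms unfolding V_eq by auto
  also have "card \<dots> = (\<Sum>i<k. card (S \<inter> kmp_part r i))"
    by (rule card_UN_disjoint) (auto simp: kmp_part_def)
  finally show ?thesis .
qed

lemma card_V: "card (kmp_vertices k r) = (\<Sum>i<k. r i)"
  using card_subset_sum[of "kmp_vertices k r" k r] part_sub
  by (simp add: Int_absorb1)

lemma mem_V: "v \<in> kmp_vertices k r \<Longrightarrow> fst v < k \<and> v \<in> kmp_part r (fst v)"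
  unfolding kmp_vertices_def kmp_part_def by auto

lemma adj_set: "v \<in> kmp_vertices k r \<Longrightarrow>
  {u \<in> kmp_vertices k r. kmp_adj v u} = kmp_vertices k r - kmp_part r (fst v)"
  unfolding kmp_vertices_def kmp_part_def kmp_adj_def by auto

lemma degE: "v \<in> kmp_vertices k r \<Longrightarrow>
  degree (kmp_vertices k r) kmp_adj v = card (kmp_vertices k r) - r (fst v)"
  unfolding degree_def using adj_set[of v k r] mem_V[of v k r] part_sub[of "fst v" k r]
  by (simp add: card_Diff_subset)

lemma card_diff_part: "finite S \<Longrightarrow> card (S - kmp_part r i) = card S - card (S \<inter> kmp_part r i)"
  by (simp add: card_Diff_subset_Int)


definition Pu :: "nat \<Rightarrow> (nat \<Rightarrow> nat) \<Rightarrow> (nat \<Rightarrow> nat) \<Rightarrow> bool" where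
  "Pu k r u \<longleftrightarrow> (\<forall>i<k. u i \<le> r i) \<and> 2 * (\<Sum>i<k. u i) + 1 = (\<Sum>i<k. r i) \<and>
     (\<forall>i<k. 0 < u i \<longrightarrow> r i \<le> 2 * u i + 2) \<and> (\<forall>i<k. u i < r i \<longrightarrow> 2 * u i \<le> r i)"

lemma pss_eq: "part_size_sum r X = sum r X"
  unfolding part_size_sum_def by simp

lemma sum_if_card: "finite X \<Longrightarrow> (\<Sum>i\<in>X. if P i then (c::int) else 0) = c * int (card {i\<in>X. P i})"
  by (simp add: sum.inter_filter[symmetric])

lemma Pu_to_subset:
  assumes r1: "\<forall>i<k. r i \<ge> 1" and P: "Pu k r u"
  shows "has_good_subset k r"
proof -
  define A where "A = {i. i<k \<and> (u i = 0 \<or> u i = r i)}"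
  define A' where "A' = {i\<in>A. u i = r i}"
  define nA where "nA = {..<k} - A"
  define B where "B = {i\<in>nA. even (r i) \<and> r i = 2*u i + 2}"
  have finA: "finite A" "finite nA" "finite A'" unfolding A_def nA_def A'_def by auto
  have S1: "S1_idx k r - A = {i\<in>nA. odd (r i)}" by (auto simp: S1_idx_def nA_def)
  have S0: "S0_idx k r - A = {i\<in>nA. even (r i)}" by (auto simp: S0_idx_def nA_def)
  have Bsub: "B \<subseteq> S0_idx k r - A" unfolding S0 B_def by auto
  have t: "int (r i) - 2*int (u i) = (if odd (r i) then 1 else 0) + (if i\<in>B then 2 else 0)"
    if "i \<in> nA" for i
  proof -
    have "i < k" "0 < u i" "u i < r i" using that P unfolding nA_def A_def Pu_def
      using le_neq_implies_less by auto
    then have "r i \<le> 2 * u i + 2" "2 * u i \<le> r i" using P unfolding Pu_def by auto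
    then show ?thesis using that unfolding B_def by auto presburger+
  qed
  have sumt: "(\<Sum>i\<in>nA. int (r i)) - 2 * (\<Sum>i\<in>nA. int (u i))
      = int (card {i\<in>nA. odd (r i)}) + 2 * int (card B)"
  proof -
    have "(\<Sum>i\<in>nA. int (r i)) - 2 * (\<Sum>i\<in>nA. int (u i)) = (\<Sum>i\<in>nA. int (r i) - 2*int (u i))"
      by (simp add: sum_subtractf sum_distrib_left)
    also have "\<dots> = (\<Sum>i\<in>nA. (if odd (r i) then 1 else 0) + (if i\<in>B then 2 else 0))"
      using t by (rule sum.cong[OF refl])
    also have "\<dots> = int (card {i\<in>nA. odd (r i)}) + 2 * int (card {i\<in>nA. i \<in> B})"
      by (simp add: sum.distrib sum_if_card finA)
    also have "{i\<in>nA. i \<in> B} = B" unfolding B_def by auto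
    finally show ?thesis .
  qed
  have kspl: "{..<k} = A \<union> nA" "A \<inter> nA = {}" unfolding nA_def A_def by auto
  have sumA: "(\<Sum>i\<in>A. int (u i)) = (\<Sum>i\<in>A'. int (r i))"
  proof -
    have "(\<Sum>i\<in>A. int (u i)) = (\<Sum>i\<in>A. if u i = r i then int (r i) else 0)"
      by (rule sum.cong) (auto simp: A_def)
    also have "\<dots> = (\<Sum>i\<in>A'. int (r i))" unfolding A'_def
      by (simp add: sum.inter_filter[symmetric] finA)
    finally show ?thesis .
  qed
  have e0: "2 * (\<Sum>i<k. int (u i)) + 1 = (\<Sum>i<k. int (r i))"
  proof -
    have "int (2 * (\<Sum>i<k. u i) + 1) = int (\<Sum>i<k. r i)" using P unfolding Pu_def by simp
    then show ?thesis by (simp add: of_nat_sum)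
  qed
  have e1: "2 * ((\<Sum>i\<in>A. int (u i)) + (\<Sum>i\<in>nA. int (u i))) + 1
      = (\<Sum>i\<in>A. int (r i)) + (\<Sum>i\<in>nA. int (r i))"
    using e0 unfolding kspl(1) by (simp add: sum.union_disjoint finA kspl(2))
  have "good_subset k r A"
    unfolding good_subset_def Let_def
  proof (intro conjI exI[of _ A'] exI[of _ "int (card B)"])
    show "A \<subseteq> {..<k}" unfolding A_def by auto
    show "A' \<subseteq> A" unfolding A'_def by auto
    show "0 \<le> int (card B)" by simp
    show "int (card B) \<le> int (card (S0_idx k r - A))"
      using Bsub by (simp add: card_mono finA S0)
    show "2 * int (part_size_sum r A') = int (part_size_sum r A) + int (card (S1_idx k r - A)) + 2 * int (card B) - 1"
      unfolding pss_eq S1 using e1 sumt sumA by (simp add: of_nat_sum)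
  qed
  then show ?thesis unfolding has_good_subset_def by blast
qed


lemma subset_to_Pu:
  assumes r1: "\<forall>i<k. r i \<ge> 1" and G: "has_good_subset k r"
  shows "\<exists>u. Pu k r u"
proof -
  obtain A where gA: "good_subset k r A" using G unfolding has_good_subset_def by blast
  obtain A' n where Ak: "A \<subseteq> {..<k}" and A'A: "A' \<subseteq> A" and n0: "0 \<le> n"
    and nle: "n \<le> int (card (S0_idx k r - A))"
    and eq: "2 * int (part_size_sum r A') = int (part_size_sum r A) + int (card (S1_idx k r - A)) + 2 * n - 1"
    using gA unfolding good_subset_def Let_def by blast
  define nA where "nA = {..<k} - A"
  have fA: "finite A" using Ak finite_subset by blast
  have finA: "finite A" "finite nA" "finite A'" unfolding nA_def
    using fA A'A finite_subset by auto
  have S1: "S1_idx k r - A = {i\<in>nA. odd (r i)}" by (auto simp: S1_idx_def nA_def)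
  have S0: "S0_idx k r - A = {i\<in>nA. even (r i)}" by (auto simp: S0_idx_def nA_def)
  obtain B where BS: "B \<subseteq> S0_idx k r - A" and cB: "card B = nat n"
  proof -
    have "nat n \<le> card (S0_idx k r - A)" using nle by linarith
    then show ?thesis using obtain_subset_with_card_n that by metis
  qed
  have Bprop: "\<forall>i\<in>B. i \<in> nA \<and> even (r i) \<and> r i \<ge> 2"
  proof
    fix i assume "i \<in> B"
    then have "i \<in> nA" "even (r i)" using BS S0 by auto
    moreover have "r i \<ge> 1" using \<open>i \<in> nA\<close> r1 unfolding nA_def by auto
    ultimately show "i \<in> nA \<and> even (r i) \<and> r i \<ge> 2" by presburger
  qed
  define u where "u i = (if i\<in>A' then r i else if i\<in>A then 0 else if odd (r i) then (r i - 1) div 2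
     else if i\<in>B then (r i - 2) div 2 else r i div 2)" for i
  have t: "int (r i) - 2*int (u i) = (if odd (r i) then 1 else 0) + (if i\<in>B then 2 else 0)"
    if "i \<in> nA" for i
  proof -
    have "i \<notin> A" "i \<notin> A'" using that A'A unfolding nA_def by auto
    have "i \<in> B \<Longrightarrow> even (r i) \<and> 2 \<le> r i" using Bprop by blast
    then show ?thesis using \<open>i \<notin> A\<close> \<open>i \<notin> A'\<close> unfolding u_def
      by (cases "i \<in> B"; cases "odd (r i)") (auto, presburger+)
  qed
  have sumt: "(\<Sum>i\<in>nA. int (r i)) - 2 * (\<Sum>i\<in>nA. int (u i))
      = int (card {i\<in>nA. odd (r i)}) + 2 * int (card B)"
  proof -
    have "(\<Sum>i\<in>nA. int (r i)) - 2 * (\<Sum>i\<in>nA. int (u i)) = (\<Sum>i\<in>nA. int (r i) - 2*int (u i))"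
      by (simp add: sum_subtractf sum_distrib_left)
    also have "\<dots> = (\<Sum>i\<in>nA. (if odd (r i) then 1 else 0) + (if i\<in>B then 2 else 0))"
      using t by (rule sum.cong[OF refl])
    also have "\<dots> = int (card {i\<in>nA. odd (r i)}) + 2 * int (card {i\<in>nA. i \<in> B})"
      by (simp add: sum.distrib sum_if_card finA)
    also have "{i\<in>nA. i \<in> B} = B" using Bprop by auto
    finally show ?thesis .
  qed
  have kspl: "{..<k} = A \<union> nA" "A \<inter> nA = {}" unfolding nA_def using Ak by auto
  have sumA: "(\<Sum>i\<in>A. int (u i)) = (\<Sum>i\<in>A'. int (r i))"
  proof -
    have "(\<Sum>i\<in>A. int (u i)) = (\<Sum>i\<in>A. if i \<in> A' then int (r i) else 0)"
      by (rule sum.cong) (auto simp: u_def)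
    also have "\<dots> = (\<Sum>i\<in>{i\<in>A. i\<in>A'}. int (r i))"
      by (simp add: sum.inter_filter[symmetric] finA)
    also have "{i\<in>A. i\<in>A'} = A'" using A'A by auto
    finally show ?thesis .
  qed
  have e1: "2 * (\<Sum>i<k. int (u i)) + 1 = (\<Sum>i<k. int (r i))"
  proof -
    have a: "(\<Sum>i<k. int (u i)) = (\<Sum>i\<in>A. int (u i)) + (\<Sum>i\<in>nA. int (u i))"
      unfolding kspl(1) by (simp add: sum.union_disjoint finA kspl(2))
    have b: "(\<Sum>i<k. int (r i)) = (\<Sum>i\<in>A. int (r i)) + (\<Sum>i\<in>nA. int (r i))"
      unfolding kspl(1) by (simp add: sum.union_disjoint finA kspl(2))
    show ?thesis using a b sumA sumt eq n0 cB unfolding pss_eq S1 by (simp add: of_nat_sum)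
  qed
  have "Pu k r u" unfolding Pu_def
  proof (intro conjI allI impI)
    fix i assume "i < k"
    show "u i \<le> r i" unfolding u_def by auto
  next
    have "int (2 * (\<Sum>i<k. u i) + 1) = int (\<Sum>i<k. r i)" using e1 by (simp add: of_nat_sum)
    then show "2 * (\<Sum>i<k. u i) + 1 = (\<Sum>i<k. r i)" by linarith
  next
    fix i assume ik: "i < k" and "0 < u i"
    show "r i \<le> 2 * u i + 2"
    proof (cases "i \<in> A")
      case True then show ?thesis using \<open>0 < u i\<close> unfolding u_def by (auto split: if_splits)
    next
      case False then have "i \<in> nA" using ik unfolding nA_def by auto
      from t[OF this] show ?thesis using Bprop by (auto split: if_splits)
    qed
  next
    fix i assume ik: "i < k" and "u i < r i"
    show "2 * u i \<le> r i"
    proof (cases "i \<in> A")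
      case True then show ?thesis using \<open>u i < r i\<close> unfolding u_def by (auto split: if_splits)
    next
      case False then have "i \<in> nA" using ik unfolding nA_def by auto
      from t[OF this] show ?thesis using Bprop by (auto split: if_splits)
    qed
  qed
  then show ?thesis by blast
qed


lemma Pu_to_bisection:
  assumes P: "Pu k r u"
  shows "has_good_bisection (kmp_vertices k r) kmp_adj"
proof -
  let ?V = "kmp_vertices k r"
  define V1 where "V1 = {x\<in>?V. snd x < u (fst x)}"
  define V2 where "V2 = ?V - V1"
  define F where "F = (\<lambda>x y. x \<in> ?V \<and> y \<in> ?V \<and> kmp_adj x y \<and> (x \<in> V1 \<longleftrightarrow> y \<notin> V1))"
  have ule: "\<forall>i<k. u i \<le> r i" and sumP: "2 * (\<Sum>i<k. u i) + 1 = (\<Sum>i<k. r i)"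
    and c1: "\<forall>i<k. 0 < u i \<longrightarrow> r i \<le> 2 * u i + 2" and c2: "\<forall>i<k. u i < r i \<longrightarrow> 2 * u i \<le> r i"
    using P unfolding Pu_def by auto
  have V1sub: "V1 \<subseteq> ?V" unfolding V1_def by auto
  have fin1: "finite V1" using V1sub by (rule finite_subset) simp
  have fin: "finite V1" "finite V2" using fin1 unfolding V2_def by auto
  have V1part: "card (V1 \<inter> kmp_part r i) = u i" if "i < k" for i
  proof -
    have "V1 \<inter> kmp_part r i = Pair i ` {..<u i}"
      using ule that unfolding V1_def kmp_vertices_def kmp_part_def by fastforce
    then show ?thesis by (simp add: card_image inj_on_def)
  qed
  have cV1: "card V1 = (\<Sum>i<k. u i)"
    using card_subset_sum[OF V1sub] V1part by simp
  have cV: "card ?V = (\<Sum>i<k. r i)" by (rule card_V)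
  have cV2: "card V2 = card ?V - card V1" unfolding V2_def using V1sub by (simp add: card_Diff_subset fin)
  have V2part: "card (V2 \<inter> kmp_part r i) = r i - u i" if "i < k" for i
  proof -
    have "V2 \<inter> kmp_part r i = kmp_part r i - (V1 \<inter> kmp_part r i)"
      unfolding V2_def using part_sub[OF that] by auto
    then show ?thesis using V1part[OF that] by (simp add: card_Diff_subset)
  qed
  have c21: "card V2 = card V1 + 1" using cV1 cV2 cV sumP by simp
  have cVV: "card ?V = card V1 + card V2" using cV1 cV2 cV sumP by simp
  have bis: "is_bisection ?V kmp_adj V1 V2 F"
    unfolding is_bisection_def
  proof (intro conjI allI impI)
    show "\<bar>int (card V1) - int (card V2)\<bar> \<le> 1" using c21 by simp
  qed (auto simp: F_def V2_def kmp_adj_def V1sub[THEN subsetD])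
  have deg: "2 * int (degree ?V F v) \<ge> int (degree ?V kmp_adj v) - 1" if vV: "v \<in> ?V" for v
  proof -
    obtain i j where v: "v = (i, j)" by force
    have ik: "i < k" and jr: "j < r i" using vV unfolding v kmp_vertices_def by auto
    have dE: "degree ?V kmp_adj v = card ?V - r i" using degE[OF vV] v by simp
    have rle: "r i \<le> card ?V" using part_sub[OF ik] by (metis card_mono card_part finite_V)
    show ?thesis
    proof (cases "v \<in> V1")
      case True
      then have ju: "j < u i" unfolding V1_def v by simp
      have "{x\<in>?V. F v x} = V2 - kmp_part r i"
        using True vV unfolding F_def V2_def kmp_adj_def kmp_part_def kmp_vertices_def v by auto
      then have "degree ?V F v = card V2 - (r i - u i)"
        unfolding degree_def using card_diff_part[OF fin(2), of r i] V2part[OF ik] by simp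
      moreover have "r i - u i \<le> card V2" using V2part[OF ik] card_mono[OF fin(2), of "V2 \<inter> kmp_part r i"] by simp
      moreover have "r i \<le> 2 * u i + 2" using c1 ik ju by auto
      ultimately show ?thesis using dE c21 cVV rle ule ik by (simp del: of_nat_sum; arith)
    next
      case False
      then have ju: "u i \<le> j" unfolding V1_def v using vV v by auto
      have "{x\<in>?V. F v x} = V1 - kmp_part r i"
        using False vV V1sub unfolding F_def kmp_adj_def kmp_part_def v by (auto simp: kmp_vertices_def)
      then have "degree ?V F v = card V1 - u i"
        unfolding degree_def using card_diff_part[OF fin(1), of r i] V1part[OF ik] by simp
      moreover have "u i \<le> card V1" using V1part[OF ik] card_mono[OF fin(1), of "V1 \<inter> kmp_part r i"] by simp
      moreover have "2 * u i \<le> r i" using c2 ik ju jr by auto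
      ultimately show ?thesis using dE c21 cVV rle ule ik by (simp del: of_nat_sum; arith)
    qed
  qed
  show ?thesis unfolding has_good_bisection_def is_good_bisection_def using bis deg by blast
qed


lemma good_bis_sym: "is_good_bisection V E V1 V2 F \<Longrightarrow> is_good_bisection V E V2 V1 F"
  unfolding is_good_bisection_def is_bisection_def by (auto simp: abs_minus_commute)

lemma bis_oneside:
  assumes gb: "is_good_bisection (kmp_vertices k r) kmp_adj V1 V2 F"
    and c21: "card V2 = card V1 + 1"
  shows "\<exists>u. Pu k r u"
proof -
  let ?V = "kmp_vertices k r"
  have bis: "is_bisection ?V kmp_adj V1 V2 F"
    and dg: "\<forall>v\<in>?V. 2 * int (degree ?V F v) \<ge> int (degree ?V kmp_adj v) - 1"
    using gb unfolding is_good_bisection_def by auto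
  have Fp: "\<And>x y. F x y \<Longrightarrow> x \<in> ?V \<and> y \<in> ?V \<and> kmp_adj x y"
    and Fc: "\<And>x y. F x y \<Longrightarrow> (x \<in> V1 \<and> y \<in> V2) \<or> (x \<in> V2 \<and> y \<in> V1)"
    and Un: "V1 \<union> V2 = ?V" and Int: "V1 \<inter> V2 = {}"
    using bis unfolding is_bisection_def by blast+
  have fin: "finite V1" "finite V2" using Un by (metis finite_Un finite_V)+
  have cVV: "card ?V = card V1 + card V2" using Un Int fin card_Un_disjoint by metis
  define u where "u i = card (V1 \<inter> kmp_part r i)" for i
  have spl: "u i + card (V2 \<inter> kmp_part r i) = r i" if "i < k" for i
  proof -
    have "(V1 \<inter> kmp_part r i) \<union> (V2 \<inter> kmp_part r i) = kmp_part r i"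
      using Un part_sub[OF that] by auto
    moreover have "(V1 \<inter> kmp_part r i) \<inter> (V2 \<inter> kmp_part r i) = {}" using Int by auto
    moreover have "finite (V1 \<inter> kmp_part r i)" "finite (V2 \<inter> kmp_part r i)" using fin by auto
    ultimately show ?thesis unfolding u_def by (metis card_Un_disjoint card_part)
  qed
  have V1sub: "V1 \<subseteq> ?V" using Un by auto
  have cV1: "card V1 = (\<Sum>i<k. u i)" unfolding u_def by (rule card_subset_sum[OF V1sub])
  have cV: "card ?V = (\<Sum>i<k. r i)" by (rule card_V)
  have "Pu k r u" unfolding Pu_def
  proof (intro conjI allI impI)
    fix i assume "i < k" then show "u i \<le> r i" using spl by fastforce
  next
    show "2 * (\<Sum>i<k. u i) + 1 = (\<Sum>i<k. r i)" using cV1 cV cVV c21 by simp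
  next
    fix i assume ik: "i < k" and "0 < u i"
    then obtain v where v: "v \<in> V1" "v \<in> kmp_part r i" unfolding u_def
      by (metis card_gt_0_iff disjoint_iff)
    have vV: "v \<in> ?V" and fv: "fst v = i" using v V1sub unfolding kmp_part_def by auto
    have "{x\<in>?V. F v x} \<subseteq> V2 - kmp_part r i"
    proof
      fix x assume "x \<in> {x\<in>?V. F v x}"
      then have "F v x" by auto
      then show "x \<in> V2 - kmp_part r i" using Fp[OF \<open>F v x\<close>] Fc[OF \<open>F v x\<close>] v Int fv
        unfolding kmp_adj_def kmp_part_def by auto
    qed
    then have "degree ?V F v \<le> card (V2 - kmp_part r i)"
      unfolding degree_def by (intro card_mono) (auto simp: fin)
    also have "\<dots> = card V2 - card (V2 \<inter> kmp_part r i)" by (rule card_diff_part[OF fin(2)])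
    finally have d1: "degree ?V F v \<le> card V2 - card (V2 \<inter> kmp_part r i)" .
    have dE: "degree ?V kmp_adj v = card ?V - r i" using degE[OF vV] fv by simp
    have le2: "card (V2 \<inter> kmp_part r i) \<le> card V2" by (rule card_mono[OF fin(2)]) auto
    have rle: "r i \<le> card ?V" using part_sub[OF ik] by (metis card_mono card_part finite_V)
    from dg vV have "2 * int (degree ?V F v) \<ge> int (degree ?V kmp_adj v) - 1" by blast
    then show "r i \<le> 2 * u i + 2" using d1 dE le2 rle spl[OF ik] cVV c21 by linarith
  next
    fix i assume ik: "i < k" and "u i < r i"
    then have "0 < card (V2 \<inter> kmp_part r i)" using spl by fastforce
    then obtain v where v: "v \<in> V2" "v \<in> kmp_part r i"
      by (metis card_gt_0_iff disjoint_iff)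
    have vV: "v \<in> ?V" and fv: "fst v = i" using v Un unfolding kmp_part_def by auto
    have "{x\<in>?V. F v x} \<subseteq> V1 - kmp_part r i"
    proof
      fix x assume "x \<in> {x\<in>?V. F v x}"
      then have "F v x" by auto
      then show "x \<in> V1 - kmp_part r i" using Fp[OF \<open>F v x\<close>] Fc[OF \<open>F v x\<close>] v Int fv
        unfolding kmp_adj_def kmp_part_def by auto
    qed
    then have "degree ?V F v \<le> card (V1 - kmp_part r i)"
      unfolding degree_def by (intro card_mono) (auto simp: fin)
    also have "\<dots> = card V1 - u i" unfolding u_def by (rule card_diff_part[OF fin(1)])
    finally have d1: "degree ?V F v \<le> card V1 - u i" .
    have dE: "degree ?V kmp_adj v = card ?V - r i" using degE[OF vV] fv by simp
    have le2: "u i \<le> card V1" unfolding u_def by (rule card_mono[OF fin(1)]) auto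
    have rle: "r i \<le> card ?V" using part_sub[OF ik] by (metis card_mono card_part finite_V)
    from dg vV have "2 * int (degree ?V F v) \<ge> int (degree ?V kmp_adj v) - 1" by blast
    then show "2 * u i \<le> r i" using d1 dE le2 rle spl[OF ik] cVV c21 by linarith
  qed
  then show ?thesis by blast
qed

lemma bisection_to_Pu:
  assumes G: "has_good_bisection (kmp_vertices k r) kmp_adj"
    and odd: "odd (card (kmp_vertices k r))"
  shows "\<exists>u. Pu k r u"
proof -
  obtain V1 V2 F where gb: "is_good_bisection (kmp_vertices k r) kmp_adj V1 V2 F"
    using G unfolding has_good_bisection_def by blast
  have Un: "V1 \<union> V2 = kmp_vertices k r" and Int: "V1 \<inter> V2 = {}"
    and ab: "\<bar>int (card V1) - int (card V2)\<bar> \<le> 1"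
    using gb unfolding is_good_bisection_def is_bisection_def by auto
  have fin: "finite V1" "finite V2" using Un by (metis finite_Un finite_V)+
  have cVV: "card (kmp_vertices k r) = card V1 + card V2" using Un Int fin card_Un_disjoint by metis
  have a1: "card V1 \<le> card V2 + 1" "card V2 \<le> card V1 + 1" using ab by linarith+
  have "card V1 \<noteq> card V2" using odd cVV by auto
  then have "card V2 = card V1 + 1 \<or> card V1 = card V2 + 1" using a1 by linarith
  then show ?thesis
  proof
    assume "card V2 = card V1 + 1" then show ?thesis using bis_oneside[OF gb] by blast
  next
    assume "card V1 = card V2 + 1" then show ?thesis using bis_oneside[OF good_bis_sym[OF gb]] by blast
  qed
qed

theorem proposition3p3:
  fixes k :: nat and r :: "nat \<Rightarrow> nat"
  assumes "\<forall>i<k. r i \<ge> 1"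
    and "odd (card (kmp_vertices k r))"
  shows "has_good_bisection (kmp_vertices k r) kmp_adj \<longleftrightarrow> has_good_subset k r"
  using bisection_to_Pu[OF _ assms(2)] Pu_to_subset[OF assms(1)]
    subset_to_Pu[OF assms(1)] Pu_to_bisection by blast

end
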